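(* Let $N\ge 1$ and let $L_1,\dots,L_N$ and $K_1,\dots,K_N$ be positive integers with $K_n\le L_n$ for all $n$. Among all TTM-trees for these parameters (as defined in the context), there exists one of minimum cost that is binary, i.e., in which every node has at most two children.
   Context: A TTM-tree is a finite rooted tree with a labelling satisfying: (i) the root carries the special label "input tensor"; (ii) there are exactly $N$ leaves, and the leaves are labelled bijectively by $\{1,\dots,N\}$ (leaf labelled $n$ stands for the new factor matrix of mode $n$); (iii) every internal node (a node that is neither the root nor a leaf) is labelled by a mode in $\{1,\dots,N\}$; (iv) for each leaf labelled $n$, the path from the root to that leaf contains exactly $N-1$ internal nodes, and every mode other than $n$ appears as a label on that path. Cost: define a cardinality $c(\cdot)$ top-down by $c(\text{root})=\prod_{j=1}^N L_j$, and for an internal node $u$ with label $n$ and parent $v$, $c(u)=(K_n/L_n)\,c(v)$; the cost of such an internal node is $K_n\,c(v)$. Leaves and the root have cost $0$. The cost of the tree is the sum of the costs of its internal nodes. (This models the number of floating-point operations of computing, for each mode $n$, the product of an $L_1\times\cdots\times L_N$ tensor with the transposed $L_j\times K_j$ factor matrices along all modes $j\neq n$, reusing intermediate results along shared tree paths.) *)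

theory Defs
  imports Complex_Main "HOL-Library.Multiset"
begin

text \<open>A node of a TTM-tree below the root: a node with no children is a leaf
  (its label is the mode n of the new factor matrix it stands for); a node with
  children is an internal node labelled by a mode. The root itself (labelled
  "input tensor") is represented implicitly: a TTM-tree is the list of the
  subtrees hanging from the root.\<close>
datatype tnode = Nd nat "tnode list"

fun leaf_paths :: "tnode \<Rightarrow> (nat list \<times> nat) list" where
  "leaf_paths (Nd n []) = [([], n)]"
| "leaf_paths (Nd m (t # ts)) =
     map (\<lambda>(p, l). (m # p, l)) (concat (map leaf_paths (t # ts)))"

definition root_paths :: "tnode list \<Rightarrow> (nat list \<times> nat) list" where
  "root_paths ts = concat (map leaf_paths ts)"

definition is_ttm_tree :: "nat \<Rightarrow> tnode list \<Rightarrow> bool" where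
  "is_ttm_tree N ts \<longleftrightarrow>
     \<comment> \<open>leaves labelled bijectively by 1..N\<close>
     mset (map snd (root_paths ts)) = mset [1..<N+1] \<and>
     \<comment> \<open>internal nodes labelled by modes; path conditions\<close>
     (\<forall>(p, l) \<in> set (root_paths ts).
        set p \<subseteq> {1..N} \<and> length p = N - 1 \<and> {1..N} - {l} \<subseteq> set p)"

text \<open>Cost of the subtree rooted at an internal node/leaf, given the cardinality
  c of its parent.\<close>
fun node_cost :: "(nat \<Rightarrow> nat) \<Rightarrow> (nat \<Rightarrow> nat) \<Rightarrow> real \<Rightarrow> tnode \<Rightarrow> real" where
  "node_cost K L c (Nd n []) = 0"
| "node_cost K L c (Nd n (t # ts)) =
     real (K n) * c +
     sum_list (map (node_cost K L (real (K n) / real (L n) * c)) (t # ts))"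

definition ttm_cost :: "nat \<Rightarrow> (nat \<Rightarrow> nat) \<Rightarrow> (nat \<Rightarrow> nat) \<Rightarrow> tnode list \<Rightarrow> real" where
  "ttm_cost N K L ts =
     sum_list (map (node_cost K L (\<Prod>j\<in>{1..N}. real (L j))) ts)"

fun binary_node :: "tnode \<Rightarrow> bool" where
  "binary_node (Nd n ts) \<longleftrightarrow> length ts \<le> 2 \<and> list_all binary_node ts"

definition binary_ttm :: "tnode list \<Rightarrow> bool" where
  "binary_ttm ts \<longleftrightarrow> length ts \<le> 2 \<and> list_all binary_node ts"

end

theory Submission
  imports Defs
begin


fun tsz :: "tnode \<Rightarrow> nat" where "tsz (Nd n ts) = Suc (sum_list (map tsz ts))"

definition fsz :: "tnode list \<Rightarrow> nat" where "fsz F = sum_list (map tsz F)"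

fun del :: "nat \<Rightarrow> tnode \<Rightarrow> tnode list" where
  "del a (Nd m []) = [Nd m []]"
| "del a (Nd m (t#ts)) = (if m = a then concat (map (del a) (t#ts))
      else [Nd m (concat (map (del a) (t#ts)))])"

definition fc :: "(nat \<Rightarrow> nat) \<Rightarrow> (nat \<Rightarrow> nat) \<Rightarrow> real \<Rightarrow> tnode list \<Rightarrow> real" where
  "fc K L c F = sum_list (map (node_cost K L c) F)"

definition pm :: "tnode list \<Rightarrow> (nat multiset \<times> nat) multiset" where
  "pm F = mset (map (\<lambda>(p,l). (mset p, l)) (root_paths F))"

lemma lp_Nd: "cs \<noteq> [] \<Longrightarrow> leaf_paths (Nd m cs) = map (\<lambda>(p, l). (m # p, l)) (root_paths cs)"
  by (cases cs) (auto simp: root_paths_def)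

lemma nc_Nd: "cs \<noteq> [] \<Longrightarrow> node_cost K L c (Nd m cs) = real (K m) * c + fc K L (real (K m) / real (L m) * c) cs"
  by (cases cs) (auto simp: fc_def)

lemma lp_ne: "leaf_paths t \<noteq> []"
proof (induction t)
  case (Nd m cs)
  then show ?case by (cases cs) auto
qed

lemma del_ne: "del a t \<noteq> []"
proof (induction t)
  case (Nd m cs)
  then show ?case by (cases cs) auto
qed

lemma rp_append[simp]: "root_paths (F @ G) = root_paths F @ root_paths G"
  by (simp add: root_paths_def)
lemma rp_Cons: "root_paths (x # G) = leaf_paths x @ root_paths G"
  by (simp add: root_paths_def)
lemma rp_Nil[simp]: "root_paths [] = []"
  by (simp add: root_paths_def)
lemma rp_concat: "root_paths (concat xss) = concat (map root_paths xss)"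
  by (induction xss) (auto simp: root_paths_def)

lemma rp_ne: "F \<noteq> [] \<Longrightarrow> root_paths F \<noteq> []"
  by (cases F) (auto simp: rp_Cons lp_ne)

lemma del_D0: "(\<forall>(p,l)\<in>set (leaf_paths t). a \<notin> set p) \<Longrightarrow> del a t = [t]"
proof (induction t)
  case (Nd m cs)
  show ?case
  proof (cases cs)
    case Nil then show ?thesis by simp
  next
    case (Cons c cs')
    have lp: "leaf_paths (Nd m cs) = map (\<lambda>(p, l). (m # p, l)) (root_paths cs)"
      using Cons lp_Nd by blast
    obtain q l where "(q,l) \<in> set (leaf_paths c)" using lp_ne
      by (metis list.set_sel(1) surj_pair)
    then have "(m#q,l) \<in> set (leaf_paths (Nd m cs))" using lp Cons
      by (force simp: rp_Cons)
    then have ma: "m \<noteq> a" using Nd.prems by auto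
    have "\<forall>x\<in>set cs. del a x = [x]"
    proof
      fix x assume x: "x \<in> set cs"
      show "del a x = [x]"
      proof (rule Nd.IH[OF x], clarify)
        fix p l assume "(p,l) \<in> set (leaf_paths x)" "a \<in> set p"
        then have "(m#p,l) \<in> set (leaf_paths (Nd m cs))" using lp x
          by (force simp: root_paths_def)
        then show False using Nd.prems \<open>a \<in> set p\<close> by auto
      qed
    qed
    then have "concat (map (del a) cs) = cs"
      by (induction cs) auto
    then show ?thesis using Cons ma by simp
  qed
qed


lemma child_path:
  assumes "c \<in> set cs" "(p,l) \<in> set (leaf_paths c)"
  shows "(m#p,l) \<in> set (leaf_paths (Nd m cs))"
proof -
  have "cs \<noteq> []" using assms by auto
  then show ?thesis using assms by (force simp: lp_Nd root_paths_def)
qed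

lemma map_rm_cons: "map (\<lambda>(p,l). (remove1 a p, l)) (map (\<lambda>(p,l). (a#p,l)) xs) = xs"
  by (induction xs) auto
lemma map_rm_cons2: "map ((\<lambda>(p,l). (remove1 a p, l)) \<circ> (\<lambda>(p,l). (a#p,l))) xs = xs"
  by (induction xs) auto

lemma del_D1:
  "(\<forall>(p,l)\<in>set (leaf_paths t). a \<in> set p \<and> distinct p) \<Longrightarrow>
   root_paths (del a t) = map (\<lambda>(p,l). (remove1 a p, l)) (leaf_paths t)"
proof (induction t)
  case (Nd m cs)
  show ?case
  proof (cases cs)
    case Nil then show ?thesis using Nd.prems by simp
  next
    case (Cons c cs')
    have ne: "cs \<noteq> []" using Cons by simp
    show ?thesis
    proof (cases "m = a")
      case True
      have "\<forall>x\<in>set cs. del a x = [x]"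
      proof
        fix x assume x: "x \<in> set cs"
        show "del a x = [x]"
        proof (rule del_D0, clarify)
          fix p l assume pl: "(p,l) \<in> set (leaf_paths x)" "a \<in> set p"
          have "(m#p,l) \<in> set (leaf_paths (Nd m cs))" using child_path[OF x pl(1)] .
          then show False using Nd.prems pl(2) True by auto
        qed
      qed
      then have cc: "concat (map (del a) cs) = cs"
        by (induction cs) auto
      have "del a (Nd m cs) = cs" using Cons True cc by simp
      then show ?thesis using True ne
        by (simp add: lp_Nd map_rm_cons2)
    next
      case False
      have IH: "root_paths (del a x) = map (\<lambda>(p,l). (remove1 a p, l)) (leaf_paths x)"
        if x: "x \<in> set cs" for x
      proof (rule Nd.IH[OF x], clarify)
        fix p l assume pl: "(p,l) \<in> set (leaf_paths x)"
        have "(m#p,l) \<in> set (leaf_paths (Nd m cs))" using child_path[OF x pl] .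
        then show "a \<in> set p \<and> distinct p" using Nd.prems False by auto
      qed
      have d: "del a (Nd m cs) = [Nd m (concat (map (del a) cs))]" using Cons False by simp
      have ne2: "concat (map (del a) cs) \<noteq> []" using ne del_ne
        by (metis Cons concat.simps(2) list.simps(9) append_is_Nil_conv)
      have "root_paths (concat (map (del a) cs)) = concat (map (\<lambda>x. map (\<lambda>(p,l). (remove1 a p, l)) (leaf_paths x)) cs)"
        using IH by (simp add: rp_concat o_def cong: map_cong)
      then have h: "root_paths (concat (map (del a) cs)) = concat (map (\<lambda>x. map (\<lambda>(p,l). (remove1 a p, l)) (leaf_paths x)) cs)" .
      have "root_paths (del a (Nd m cs)) = map (\<lambda>(p, l). (m # p, l)) (root_paths (concat (map (del a) cs)))"
        using d lp_Nd[OF ne2] by (simp add: rp_Cons)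
      also have "\<dots> = map (\<lambda>(p, l). (m # p, l)) (concat (map (\<lambda>x. map (\<lambda>(p,l). (remove1 a p, l)) (leaf_paths x)) cs))"
        using h by simp
      also have "\<dots> = map (\<lambda>(p,l). (remove1 a p, l)) (map (\<lambda>(p, l). (m # p, l)) (root_paths cs))"
        using False by (induction cs) (auto simp: rp_Cons)
      also have "\<dots> = map (\<lambda>(p,l). (remove1 a p, l)) (leaf_paths (Nd m cs))"
        using ne by (simp add: lp_Nd)
      finally show ?thesis .
    qed
  qed
qed

lemma fc_Nil[simp]: "fc K L c [] = 0" by (simp add: fc_def)
lemma fc_append[simp]: "fc K L c (F @ G) = fc K L c F + fc K L c G"
  by (simp add: fc_def)
lemma fc_Cons: "fc K L c (x # G) = node_cost K L c x + fc K L c G"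
  by (simp add: fc_def)
lemma fc_concat: "fc K L c (concat xss) = sum_list (map (fc K L c) xss)"
  by (induction xss) (auto simp: fc_def)

lemma r_le1: "K a \<le> L a \<Longrightarrow> real (K a) / real (L a) \<le> 1"
  by (cases "L a = 0") auto

lemma del_D2:
  assumes "(\<forall>(p,l)\<in>set (leaf_paths t). a \<in> set p \<and> distinct p \<and> (\<forall>x\<in>set p. K x \<le> L x))"
    and "c \<ge> 0"
  shows "fc K L (real (K a) / real (L a) * c) (del a t) \<le> node_cost K L c t"
  using assms
proof (induction t arbitrary: c)
  case (Nd m cs)
  show ?case
  proof (cases cs)
    case Nil then show ?thesis using Nd.prems by simp
  next
    case (Cons c0 cs')
    have ne: "cs \<noteq> []" using Cons by simp
    show ?thesis
    proof (cases "m = a")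
      case True
      have "\<forall>x\<in>set cs. del a x = [x]"
      proof
        fix x assume x: "x \<in> set cs"
        show "del a x = [x]"
        proof (rule del_D0, clarify)
          fix p l assume pl: "(p,l) \<in> set (leaf_paths x)" "a \<in> set p"
          have "(m#p,l) \<in> set (leaf_paths (Nd m cs))" using child_path[OF x pl(1)] .
          then show False using Nd.prems pl(2) True by auto
        qed
      qed
      then have cc: "concat (map (del a) cs) = cs"
        by (induction cs) auto
      have "del a (Nd m cs) = cs" using Cons True cc by simp
      moreover have "real (K m) * c \<ge> 0" using Nd.prems by simp
      ultimately show ?thesis using True ne by (simp add: nc_Nd)
    next
      case False
      obtain pp ll where "(pp,ll) \<in> set (leaf_paths (Nd m cs))"
        using lp_ne by (metis list.set_sel(1) surj_pair)
      then have "a \<in> set pp" "\<forall>x\<in>set pp. K x \<le> L x" using Nd.prems by auto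
      then have "K a \<le> L a" by blast
      then have ra: "real (K a) / real (L a) \<le> 1" by (rule r_le1)
      have rm: "real (K m) / real (L m) * c \<ge> 0" using Nd.prems by simp
      have IH: "fc K L (real (K a) / real (L a) * (real (K m) / real (L m) * c)) (del a x)
               \<le> node_cost K L (real (K m) / real (L m) * c) x"
        if x: "x \<in> set cs" for x
      proof (rule Nd.IH[OF x _ rm], clarify)
        fix p l assume pl: "(p,l) \<in> set (leaf_paths x)"
        have "(m#p,l) \<in> set (leaf_paths (Nd m cs))" using child_path[OF x pl] .
        then show "a \<in> set p \<and> distinct p \<and> (\<forall>x\<in>set p. K x \<le> L x)" using Nd.prems False by auto
      qed
      have d: "del a (Nd m cs) = [Nd m (concat (map (del a) cs))]" using Cons False by simp
      have ne2: "concat (map (del a) cs) \<noteq> []" using ne del_ne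
        by (metis Cons concat.simps(2) list.simps(9) append_is_Nil_conv)
      have e: "real (K m) / real (L m) * (real (K a) / real (L a) * c) =
               real (K a) / real (L a) * (real (K m) / real (L m) * c)" by (simp only: mult.left_commute)
      have s: "fc K L (real (K m) / real (L m) * (real (K a) / real (L a) * c)) (concat (map (del a) cs))
            \<le> fc K L (real (K m) / real (L m) * c) cs"
        unfolding e fc_concat using IH
        by (simp add: fc_def[of _ _ _ cs] sum_list_mono map_map o_def del: fc_def)
      have k: "real (K m) * (real (K a) / real (L a) * c) \<le> real (K m) * c"
      proof -
        have "real (K a) / real (L a) * c \<le> c"
          by (intro mult_left_le_one_le) (use ra Nd.prems(2) in auto)
        then show ?thesis by (intro mult_left_mono) auto
      qed
      show ?thesis using d ne ne2 s k by (simp add: nc_Nd fc_Cons)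
    qed
  qed
qed

lemma fsz_Nil[simp]: "fsz [] = 0" by (simp add: fsz_def)
lemma fsz_append[simp]: "fsz (F @ G) = fsz F + fsz G" by (simp add: fsz_def)
lemma fsz_Cons[simp]: "fsz (x # G) = tsz x + fsz G" by (simp add: fsz_def)
lemma fsz_concat: "fsz (concat xss) = sum_list (map fsz xss)"
  by (induction xss) auto

lemma del_sz_le: "fsz (del a t) \<le> tsz t"
proof (induction t)
  case (Nd m cs)
  have "sum_list (map (\<lambda>x. fsz (del a x)) cs) \<le> sum_list (map tsz cs)"
    using Nd.IH by (simp add: sum_list_mono)
  then show ?case
  proof (cases cs)
    case (Cons c0 cs')
    then show ?thesis using \<open>sum_list (map (\<lambda>x. fsz (del a x)) cs) \<le> sum_list (map tsz cs)\<close>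
      by (simp add: fsz_concat o_def fsz_def[symmetric])
  qed simp
qed

lemma del_sz_lt: "(\<forall>(p,l)\<in>set (leaf_paths t). a \<in> set p) \<Longrightarrow> fsz (del a t) < tsz t"
proof (induction t)
  case (Nd m cs)
  show ?case
  proof (cases cs)
    case Nil then show ?thesis using Nd.prems by simp
  next
    case (Cons c0 cs')
    have le: "sum_list (map (\<lambda>x. fsz (del a x)) cs') \<le> sum_list (map tsz cs')"
      using del_sz_le by (simp add: sum_list_mono)
    show ?thesis
    proof (cases "m = a")
      case True
      have "fsz (del a c0) \<le> tsz c0" by (rule del_sz_le)
      then show ?thesis using True Cons le by (simp add: fsz_concat o_def)
    next
      case False
      have "fsz (del a c0) < tsz c0"
      proof (rule Nd.IH, simp add: Cons, clarify)
        fix p l assume pl: "(p,l) \<in> set (leaf_paths c0)"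
        have "c0 \<in> set cs" using Cons by simp
        from child_path[OF this pl] have "(m#p,l) \<in> set (leaf_paths (Nd m cs))" .
        then show "a \<in> set p" using Nd.prems False by auto
      qed
      then show ?thesis using False Cons le by (simp add: fsz_concat o_def fsz_def[symmetric])
    qed
  qed
qed




lemma pm_append[simp]: "pm (F @ G) = pm F + pm G"
  by (simp add: pm_def)
lemma pm_Cons: "pm (x # G) = pm [x] + pm G"
  by (simp add: pm_def rp_Cons root_paths_def)
lemma pm_Nil[simp]: "pm [] = {#}"
  by (simp add: pm_def)
lemma aux1: "mset (map (\<lambda>(p,l). (mset p, l)) (map (\<lambda>(p,l). (m#p,l)) xs)) = mset (map (\<lambda>(p,l). (mset (m#p), l)) xs)"
  by (induction xs) auto
lemma aux2: "image_mset (\<lambda>(P,l). (add_mset m P, l)) (mset (map (\<lambda>(p,l). (mset p, l)) xs)) = mset (map (\<lambda>(p,l). (mset (m#p), l)) xs)"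
  by (induction xs) auto
lemma pm_Nd: assumes "cs \<noteq> []" shows "pm [Nd m cs] = mset (map (\<lambda>(p,l). (mset (m#p), l)) (root_paths cs))"
  unfolding pm_def using lp_Nd[OF assms, of m] by (simp only: rp_Cons rp_Nil append_Nil2 aux1)
lemma pm_Nd': assumes "cs \<noteq> []" shows "pm [Nd m cs] = image_mset (\<lambda>(P,l). (add_mset m P, l)) (pm cs)"
proof -
  have "pm [Nd m cs] = mset (map (\<lambda>(p,l). (mset (m#p), l)) (root_paths cs))" by (rule pm_Nd[OF assms])
  also have "\<dots> = image_mset (\<lambda>(P,l). (add_mset m P, l)) (pm cs)" unfolding pm_def aux2 ..
  finally show ?thesis .
qed
lemma pm_mem: "t \<in> set F \<Longrightarrow> (p,l) \<in> set (leaf_paths t) \<Longrightarrow> (mset p, l) \<in># pm F"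
  by (force simp: pm_def root_paths_def)
lemma pm_sub: "t \<in> set F \<Longrightarrow> pm [t] \<subseteq># pm F"
proof (induction F)
  case (Cons x F)
  show ?case
  proof (cases "t = x")
    case True
    then show ?thesis by (simp add: pm_Cons[of x F])
  next
    case False
    then have "pm [t] \<subseteq># pm F" using Cons by simp
    also have "pm F \<subseteq># pm (x # F)" by (simp add: pm_Cons[of x F])
    finally show ?thesis .
  qed
qed simp
lemma pm_ne: "F \<noteq> [] \<Longrightarrow> pm F \<noteq> {#}"
  using rp_ne by (simp add: pm_def)

definition dm :: "'a multiset \<Rightarrow> bool" where "dm M \<longleftrightarrow> (\<forall>a. count M a \<le> 1)"

definition good :: "(nat \<Rightarrow> nat) \<Rightarrow> (nat \<Rightarrow> nat) \<Rightarrow> (nat multiset \<times> nat) multiset \<Rightarrow> bool" where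
  "good K L M \<longleftrightarrow>
    (\<forall>x\<in>#M. dm (fst x) \<and> snd x \<notin># fst x \<and> (\<forall>y\<in>#fst x. K y \<le> L y)) \<and>
    (\<forall>x\<in>#M. \<forall>y\<in>#M. insert (snd x) (set_mset (fst x)) = insert (snd y) (set_mset (fst y))) \<and>
    dm (image_mset snd M)"

lemma good_sub: "A \<subseteq># B \<Longrightarrow> good K L B \<Longrightarrow> good K L A"
proof -
  assume ab: "A \<subseteq># B" and g: "good K L B"
  have s: "set_mset A \<subseteq> set_mset B" using ab by (rule set_mset_mono)
  have "image_mset snd A \<subseteq># image_mset snd B" using ab by (rule image_mset_subseteq_mono)
  then have c: "count (image_mset snd A) a \<le> count (image_mset snd B) a" for a
    by (simp add: subseteq_mset_def)
  show ?thesis using g s c unfolding good_def dm_def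
    by (meson order_trans subsetD)
qed

lemma ins_lemma:
  assumes "m \<notin># P" "m \<notin># P'" "l \<noteq> m" "l' \<noteq> m"
    "insert l (insert m (set_mset P)) = insert l' (insert m (set_mset P'))"
  shows "insert l (set_mset P) = insert l' (set_mset P')"
proof -
  have "insert l (set_mset P) = insert l (insert m (set_mset P)) - {m}" using assms by auto
  also have "\<dots> = insert l' (insert m (set_mset P')) - {m}" using assms(5) by simp
  also have "\<dots> = insert l' (set_mset P')" using assms by auto
  finally show ?thesis .
qed

lemma good_img:
  assumes g: "good K L (image_mset (\<lambda>(P,l). (add_mset m P, l)) M)"
  shows "good K L M"
proof -
  let ?f = "\<lambda>(P::nat multiset,l::nat). (add_mset m P, l)"
  have g00: "(\<forall>x\<in>#image_mset ?f M. dm (fst x) \<and> snd x \<notin># fst x \<and> (\<forall>y\<in>#fst x. K y \<le> L y)) \<and>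
    (\<forall>x\<in>#image_mset ?f M. \<forall>y\<in>#image_mset ?f M. insert (snd x) (set_mset (fst x)) = insert (snd y) (set_mset (fst y))) \<and>
    dm (image_mset snd (image_mset ?f M))"
    using g unfolding good_def .
  note g0 = conjunct1[OF g00] conjunct1[OF conjunct2[OF g00]] conjunct2[OF conjunct2[OF g00]]
  have g1: "dm (add_mset m P) \<and> l \<notin># add_mset m P \<and> (\<forall>y\<in>#add_mset m P. K y \<le> L y)"
    if "(P,l) \<in># M" for P l
  proof -
    have "?f (P,l) \<in># image_mset ?f M" using that by (simp only: set_image_mset) (rule imageI)
    from bspec[OF g0(1) this] show ?thesis by simp
  qed
  have g3: "insert l (insert m (set_mset P)) = insert l' (insert m (set_mset P'))"
    if "(P,l) \<in># M" "(P',l') \<in># M" for P l P' l'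
  proof -
    have a: "?f (P,l) \<in># image_mset ?f M" using that(1) by (simp only: set_image_mset) (rule imageI)
    have b: "?f (P',l') \<in># image_mset ?f M" using that(2) by (simp only: set_image_mset) (rule imageI)
    from bspec[OF bspec[OF g0(2) a] b] show ?thesis by simp
  qed
  have notin: "m \<notin># P" if "(P,l) \<in># M" for P l
  proof -
    have "count (add_mset m P) m \<le> 1" using g1[OF that] unfolding dm_def by blast
    then have "count P m = 0" by simp
    then show ?thesis by (simp add: count_eq_zero_iff)
  qed
  have A: "\<forall>x\<in>#M. dm (fst x) \<and> snd x \<notin># fst x \<and> (\<forall>y\<in>#fst x. K y \<le> L y)"
  proof
    fix x assume x: "x \<in># M"
    obtain P l where xe: "x = (P,l)" by (cases x)
    have h: "dm (add_mset m P) \<and> l \<notin># add_mset m P \<and> (\<forall>y\<in>#add_mset m P. K y \<le> L y)"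
      using g1 x xe by simp
    have "count P a \<le> count (add_mset m P) a" for a by simp
    then have "dm P" using h unfolding dm_def by (meson order_trans)
    then show "dm (fst x) \<and> snd x \<notin># fst x \<and> (\<forall>y\<in>#fst x. K y \<le> L y)" using h xe by simp
  qed
  have B: "\<forall>x\<in>#M. \<forall>y\<in>#M. insert (snd x) (set_mset (fst x)) = insert (snd y) (set_mset (fst y))"
  proof (intro ballI)
    fix x y assume x: "x \<in># M" and y: "y \<in># M"
    obtain P l where xe: "x = (P,l)" by (cases x)
    obtain P' l' where ye: "y = (P',l')" by (cases y)
    have xm: "(P,l) \<in># M" using x xe by simp
    have ym: "(P',l') \<in># M" using y ye by simp
    have 1: "m \<notin># P" "m \<notin># P'" using notin[OF xm] notin[OF ym] .
    have 2: "l \<noteq> m" "l' \<noteq> m" using conjunct1[OF conjunct2[OF g1[OF xm]]] conjunct1[OF conjunct2[OF g1[OF ym]]] by auto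
    have 3: "insert l (insert m (set_mset P)) = insert l' (insert m (set_mset P'))"
      using g3[OF xm ym] .
    show "insert (snd x) (set_mset (fst x)) = insert (snd y) (set_mset (fst y))"
      using ins_lemma[OF 1 2 3] unfolding xe ye by simp
  qed
  have "image_mset snd (image_mset ?f M) = image_mset snd M"
    by (simp add: image_mset.compositionality o_def case_prod_beta)
  then have C: "dm (image_mset snd M)" using g0(3) by simp
  show ?thesis unfolding good_def using A B C by (intro conjI)
qed

lemma dm_distinct: "dm (mset p) \<Longrightarrow> distinct p"
  unfolding dm_def distinct_count_atmost_1
proof (intro allI)
  fix a assume h: "\<forall>a. count (mset p) a \<le> 1"
  show "count (mset p) a = (if a \<in> set p then 1 else 0)"
  proof (cases "a \<in> set p")
    case True
    then have "count (mset p) a \<ge> 1" by (simp add: Suc_leI)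
    then show ?thesis using h True by (simp add: le_antisym)
  next
    case False
    then show ?thesis by (simp add: count_mset_0_iff)
  qed
qed

lemma good_path:
  assumes "good K L (pm F)" "t \<in> set F" "(p,l) \<in> set (leaf_paths t)"
  shows "distinct p \<and> l \<notin> set p \<and> (\<forall>x\<in>set p. K x \<le> L x)"
proof -
  have m: "(mset p, l) \<in># pm F" using pm_mem[OF assms(2,3)] .
  have g: "\<forall>x\<in>#pm F. dm (fst x) \<and> snd x \<notin># fst x \<and> (\<forall>y\<in>#fst x. K y \<le> L y)"
    using assms(1) unfolding good_def by (rule conjunct1)
  from bspec[OF g m] have "dm (mset p) \<and> l \<notin># mset p \<and> (\<forall>y\<in>#mset p. K y \<le> L y)" by simp
  then have h: "dm (mset p)" "l \<notin># mset p" "\<forall>y\<in>#mset p. K y \<le> L y" by blast+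
  have "distinct p" using dm_distinct[OF h(1)] .
  then show ?thesis using h(2,3) by simp
qed

lemma good_R:
  assumes "good K L (pm F)" "t \<in> set F" "(p,l) \<in> set (leaf_paths t)"
     "t' \<in> set F" "(p',l') \<in> set (leaf_paths t')"
  shows "insert l (set p) = insert l' (set p')"
proof -
  have m: "(mset p, l) \<in># pm F" using pm_mem[OF assms(2,3)] .
  have m': "(mset p', l') \<in># pm F" using pm_mem[OF assms(4,5)] .
  have g: "\<forall>x\<in>#pm F. \<forall>y\<in>#pm F. insert (snd x) (set_mset (fst x)) = insert (snd y) (set_mset (fst y))"
    using assms(1) unfolding good_def by (rule conjunct1[OF conjunct2])
  from bspec[OF bspec[OF g m] m'] show ?thesis by simp
qed

lemma two_same_label:
  assumes "(P1,l) \<in># A" "(P2,l) \<in># B" "dm (image_mset snd (A + B + C))"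
  shows False
proof -
  have "snd (P1,l) \<in># image_mset snd A" using assms(1) by (simp only: set_image_mset) (rule imageI)
  moreover have "snd (P2,l) \<in># image_mset snd B" using assms(2) by (simp only: set_image_mset) (rule imageI)
  ultimately have "count (image_mset snd A) l > 0" "count (image_mset snd B) l > 0"
    by simp_all
  then have "count (image_mset snd (A + B + C)) l \<ge> 2"
    by (simp only: image_mset_union count_union)
  moreover have "count (image_mset snd (A + B + C)) l \<le> 1" using assms(3) unfolding dm_def by blast
  ultimately show False by simp
qed



lemma mset_rm: "a \<in> set p \<Longrightarrow> mset (a # remove1 a p) = mset p"
  by (simp add: mset_remove1 insert_DiffM)

lemma ball_pair: assumes "\<forall>(p,l)\<in>S. P p l" "(p,l) \<in> S" shows "P p l"
  using bspec[OF assms] by simp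

lemma merge:
  assumes g: "good K L (pm (x # w # G))" and xe: "x = Nd a X" and X: "X \<noteq> []"
    and aw: "\<forall>(p,l)\<in>set (leaf_paths w). a \<in> set p"
  shows "pm (Nd a (X @ del a w) # G) = pm (x # w # G)"
    "fsz (Nd a (X @ del a w) # G) < fsz (x # w # G)"
    "\<forall>c\<ge>0. fc K L c (Nd a (X @ del a w) # G) \<le> fc K L c (x # w # G)"
proof -
  have wp: "\<forall>(p,l)\<in>set (leaf_paths w). a \<in> set p \<and> distinct p \<and> (\<forall>y\<in>set p. K y \<le> L y)"
  proof (rule ballI, clarify)
    fix p l assume pl: "(p,l) \<in> set (leaf_paths w)"
    have "w \<in> set (x#w#G)" by simp
    from good_path[OF g this pl] have "distinct p \<and> (\<forall>y\<in>set p. K y \<le> L y)" by simp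
    moreover have "a \<in> set p" using ball_pair[OF aw pl] .
    ultimately show "a \<in> set p \<and> distinct p \<and> (\<forall>y\<in>set p. K y \<le> L y)" by simp
  qed
  have wp2: "\<forall>(p,l)\<in>set (leaf_paths w). a \<in> set p \<and> distinct p"
  proof (rule ballI, clarify)
    fix p l assume pl: "(p,l) \<in> set (leaf_paths w)"
    show "a \<in> set p \<and> distinct p" using ball_pair[OF wp pl] by simp
  qed
  define D where "D = del a w"
  have D1: "root_paths D = map (\<lambda>(p,l). (remove1 a p, l)) (leaf_paths w)"
    unfolding D_def by (rule del_D1[OF wp2])
  have ne: "X @ D \<noteq> []" using X by simp
  have mm: "map (\<lambda>(p,l). (mset (a#p), l)) (map (\<lambda>(p,l). (remove1 a p, l)) (leaf_paths w))
      = map (\<lambda>(p,l). (mset p, l)) (leaf_paths w)"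
  proof -
    have "map (\<lambda>(p,l). (mset (a#p), l)) (map (\<lambda>(p,l). (remove1 a p, l)) ps)
      = map (\<lambda>(p,l). (mset p, l)) ps" if "\<forall>(p,l)\<in>set ps. a \<in> set p" for ps
      using that
    proof (induction ps)
      case (Cons q ps)
      obtain p l where q: "q = (p,l)" by (cases q)
      have "(p,l) \<in> set (q#ps)" using q by simp
      from ball_pair[OF Cons.prems this] have ap: "a \<in> set p" .
      have pr: "\<forall>(p,l)\<in>set ps. a \<in> set p" using Cons.prems by simp
      then show ?case using Cons.IH[OF pr] q ap by (simp add: mset_rm)
    qed simp
    from this[OF aw] show ?thesis .
  qed
  have "pm [Nd a (X @ D)] = mset (map (\<lambda>(p,l). (mset (a#p), l)) (root_paths (X @ D)))"
    by (rule pm_Nd[OF ne])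
  also have "\<dots> = mset (map (\<lambda>(p,l). (mset (a#p), l)) (root_paths X)) +
        mset (map (\<lambda>(p,l). (mset p, l)) (leaf_paths w))"
    by (simp only: rp_append map_append mset_append D1 mm)
  also have "\<dots> = pm [x] + pm [w]"
  proof -
    have px: "pm [x] = mset (map (\<lambda>(p,l). (mset (a#p), l)) (root_paths X))"
      using pm_Nd[OF X, of a] xe by simp
    have pw: "pm [w] = mset (map (\<lambda>(p,l). (mset p, l)) (leaf_paths w))"
      unfolding pm_def rp_Cons rp_Nil append_Nil2 ..
    show ?thesis by (simp only: px pw)
  qed
  finally have e: "pm [Nd a (X @ D)] = pm [x] + pm [w]" .
  have "pm (Nd a (X @ D) # G) = pm [Nd a (X @ D)] + pm G" by (rule pm_Cons)
  also have "\<dots> = pm [x] + (pm [w] + pm G)" by (simp only: e add.assoc)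
  also have "\<dots> = pm (x # w # G)" by (simp only: pm_Cons[of x "w#G"] pm_Cons[of w G])
  finally show "pm (Nd a (X @ del a w) # G) = pm (x # w # G)" unfolding D_def .
  have "fsz D < tsz w" unfolding D_def by (rule del_sz_lt[OF aw])
  then show "fsz (Nd a (X @ del a w) # G) < fsz (x # w # G)"
    unfolding D_def using xe by (simp add: fsz_def)
  show "\<forall>c\<ge>0. fc K L c (Nd a (X @ del a w) # G) \<le> fc K L c (x # w # G)"
  proof (intro allI impI)
    fix c :: real assume c: "0 \<le> c"
    have "fc K L (real (K a) / real (L a) * c) D \<le> node_cost K L c w"
      unfolding D_def by (rule del_D2[OF wp c])
    then have "node_cost K L c (Nd a (X @ D)) \<le> node_cost K L c x + node_cost K L c w"
      using xe nc_Nd[OF ne] nc_Nd[OF X] by simp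
    then show "fc K L c (Nd a (X @ del a w) # G) \<le> fc K L c (x # w # G)"
      unfolding D_def by (simp add: fc_Cons)
  qed
qed



lemma pm_map: "(\<forall>t\<in>set F. pm [f t] = pm [t]) \<Longrightarrow> pm (map f F) = pm F"
proof (induction F)
  case (Cons x F)
  have "pm (map f (x # F)) = pm [f x] + pm (map f F)" using pm_Cons[of "f x" "map f F"] by simp
  also have "\<dots> = pm [x] + pm F" using Cons by simp
  also have "\<dots> = pm (x # F)" using pm_Cons[of x F] by simp
  finally show ?case .
qed simp

lemma fc_map: "(\<forall>t\<in>set F. node_cost K L c (f t) \<le> node_cost K L c t) \<Longrightarrow> fc K L c (map f F) \<le> fc K L c F"
  by (induction F) (auto simp: fc_Cons add_mono)

lemma good_F_img:
  assumes "good K L (pm F)" "t \<in> set F" "t = Nd m cs" "cs \<noteq> []"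
  shows "good K L (pm cs)"
proof -
  have "good K L (pm [t])" using good_sub[OF pm_sub[OF assms(2)] assms(1)] .
  then have "good K L (image_mset (\<lambda>(P,l). (add_mset m P, l)) (pm cs))"
    using pm_Nd'[OF assms(4), of m] assms(3) by simp
  then show ?thesis by (rule good_img)
qed

lemma binarize:
  "good K L (pm F) \<Longrightarrow> \<exists>F'. length F' \<le> 2 \<and> list_all binary_node F' \<and> pm F' = pm F \<and>
      (\<forall>c\<ge>0. fc K L c F' \<le> fc K L c F)"
proof (induction "fsz F" arbitrary: F rule: less_induct)
  case less
  note gF = less.prems
  show ?case
  proof (cases "length F \<ge> 3")
    case True
    obtain x F1 where F1: "F = x # F1" using True by (cases F) auto
    obtain y F2 where F2: "F1 = y # F2" using True F1 by (cases F1) auto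
    obtain z rest where F3: "F2 = z # rest" using True F1 F2 by (cases F2) auto
    have F: "F = x # y # z # rest" using F1 F2 F3 by simp
    have pmF: "pm F = pm [x] + pm [y] + pm [z] + pm rest"
      unfolding F pm_Cons[of x "y#z#rest"] pm_Cons[of y "z#rest"] pm_Cons[of z rest]
      by (simp only: add.assoc)
    have dmF: "dm (image_mset snd (pm F))" using gF unfolding good_def by (rule conjunct2[OF conjunct2])
    obtain a X where xe: "x = Nd a X" by (cases x)
    have xF: "x \<in> set F" "y \<in> set F" "z \<in> set F" using F by auto
    have X: "X \<noteq> []"
    proof
      assume X0: "X = []"
      obtain p l where pl: "(p,l) \<in> set (leaf_paths y)" using lp_ne
        by (metis list.set_sel(1) surj_pair)
      have xl: "([],a) \<in> set (leaf_paths x)" using xe X0 by simp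
      have R: "insert a (set []) = insert l (set p)" using good_R[OF gF xF(1) xl xF(2) pl] .
      have "l \<in> insert a (set [])" unfolding R by simp
      then have la: "l = a" by simp
      have m1: "(mset [], a) \<in># pm [x]" using pm_mem[of x "[x]", OF _ xl] by simp
      have m2: "(mset p, a) \<in># pm [y]" using pm_mem[of y "[y]", OF _ pl] la by simp
      have "dm (image_mset snd (pm [x] + pm [y] + (pm [z] + pm rest)))"
        using dmF unfolding pmF by (simp only: add.assoc)
      from two_same_label[OF m1 m2 this] show False .
    qed
    obtain p0 l0 where p0: "(p0,l0) \<in> set (leaf_paths (hd X))" using lp_ne
      by (metis list.set_sel(1) surj_pair)
    have "hd X \<in> set X" using X by simp
    from child_path[OF this p0] have xp: "(a#p0,l0) \<in> set (leaf_paths x)" using xe by simp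
    have aR: "a \<in> set p" if t: "t \<in> set F" and pl: "(p,l) \<in> set (leaf_paths t)" and la: "l \<noteq> a" for t p l
    proof -
      have "insert l0 (set (a#p0)) = insert l (set p)" using good_R[OF gF xF(1) xp t pl] .
      then have "a \<in> insert l (set p)" by (metis insertCI list.set_intros(1))
      then show ?thesis using la by simp
    qed
    have key: "\<exists>F'. length F' \<le> 2 \<and> list_all binary_node F' \<and> pm F' = pm F \<and>
      (\<forall>c\<ge>0. fc K L c F' \<le> fc K L c F)"
      if e1: "pm (x # w # G) = pm F" and e2: "fsz (x # w # G) = fsz F"
        and e3: "\<forall>c. fc K L c (x # w # G) = fc K L c F"
        and aw: "\<forall>(p,l)\<in>set (leaf_paths w). a \<in> set p" for w G
    proof -
      have g': "good K L (pm (x # w # G))" using gF e1 by simp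
      note M = merge[OF g' xe X aw]
      have lt: "fsz (Nd a (X @ del a w) # G) < fsz F" using M(2) e2 by simp
      have g1: "good K L (pm (Nd a (X @ del a w) # G))" using g' M(1) by simp
      obtain F' where F': "length F' \<le> 2" "list_all binary_node F'"
        "pm F' = pm (Nd a (X @ del a w) # G)"
        "\<forall>c\<ge>0. fc K L c F' \<le> fc K L c (Nd a (X @ del a w) # G)"
        using less.hyps[OF lt g1] by blast
      have "pm F' = pm F" using F'(3) M(1) e1 by simp
      moreover have "\<forall>c\<ge>0. fc K L c F' \<le> fc K L c F"
      proof (intro allI impI)
        fix c :: real assume c: "0 \<le> c"
        have "fc K L c F' \<le> fc K L c (Nd a (X @ del a w) # G)" using F'(4) c by simp
        also have "\<dots> \<le> fc K L c (x # w # G)" using M(3) c by simp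
        also have "\<dots> = fc K L c F" using e3 by simp
        finally show "fc K L c F' \<le> fc K L c F" .
      qed
      ultimately show ?thesis using F'(1,2) by blast
    qed
    show ?thesis
    proof (cases "\<forall>(p,l)\<in>set (leaf_paths y). l \<noteq> a")
      case True
      have aw: "\<forall>(p,l)\<in>set (leaf_paths y). a \<in> set p"
      proof (rule ballI, clarify)
        fix p l assume pl: "(p,l) \<in> set (leaf_paths y)"
        show "a \<in> set p" using aR[OF xF(2) pl] ball_pair[OF True pl] by simp
      qed
      show ?thesis by (rule key[of y "z # rest"]) (use aw in \<open>simp_all add: F\<close>)
    next
      case False
      then obtain p1 l1 where pl1: "(p1,l1) \<in> set (leaf_paths y)" "l1 = a" by auto
      have aw: "\<forall>(p,l)\<in>set (leaf_paths z). a \<in> set p"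
      proof (rule ballI, clarify)
        fix p l assume pl: "(p,l) \<in> set (leaf_paths z)"
        have "l \<noteq> a"
        proof
          assume la: "l = a"
          have m1: "(mset p1, a) \<in># pm [y]" using pm_mem[of y "[y]", OF _ pl1(1)] pl1(2) by simp
          have m2: "(mset p, a) \<in># pm [z]" using pm_mem[of z "[z]", OF _ pl] la by simp
          have "dm (image_mset snd (pm [y] + pm [z] + (pm [x] + pm rest)))"
            using dmF unfolding pmF by (simp only: ac_simps)
          from two_same_label[OF m1 m2 this] show False .
        qed
        then show "a \<in> set p" using aR[OF xF(3) pl] by simp
      qed
      have e1: "pm (x # z # y # rest) = pm F"
        unfolding pmF pm_Cons[of x "z#y#rest"] pm_Cons[of y rest] pm_Cons[of z "y#rest"]
        by (simp only: ac_simps)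
      show ?thesis by (rule key[of z "y # rest"]) (use aw e1 in \<open>simp_all add: F fc_Cons\<close>)
    qed
  next
    case False
    have node: "\<forall>t\<in>set F. \<exists>t'. binary_node t' \<and> pm [t'] = pm [t] \<and>
        (\<forall>c\<ge>0. node_cost K L c t' \<le> node_cost K L c t)"
    proof
      fix t assume t: "t \<in> set F"
      obtain m cs where te: "t = Nd m cs" by (cases t)
      show "\<exists>t'. binary_node t' \<and> pm [t'] = pm [t] \<and>
        (\<forall>c\<ge>0. node_cost K L c t' \<le> node_cost K L c t)"
      proof (cases "cs = []")
        case True
        then show ?thesis using te by (intro exI[of _ t]) simp
      next
        case cne: False
        have "tsz t \<le> fsz F" unfolding fsz_def
          using t by (simp add: member_le_sum_list)
        moreover have "tsz t = Suc (fsz cs)" using te by (simp add: fsz_def)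
        ultimately have lt: "fsz cs < fsz F" by simp
        have gcs: "good K L (pm cs)" by (rule good_F_img[OF gF t te cne])
        obtain cs' where cs': "length cs' \<le> 2" "list_all binary_node cs'" "pm cs' = pm cs"
          "\<forall>c\<ge>0. fc K L c cs' \<le> fc K L c cs"
          using less.hyps[OF lt gcs] by blast
        have cne': "cs' \<noteq> []"
        proof
          assume "cs' = []"
          then have "pm cs = {#}" using cs'(3) by simp
          then show False using pm_ne[OF cne] by simp
        qed
        have b: "binary_node (Nd m cs')" using cs'(1,2) by simp
        have p: "pm [Nd m cs'] = pm [t]"
          using pm_Nd'[OF cne', of m] pm_Nd'[OF cne, of m] cs'(3) te by simp
        have c: "\<forall>c\<ge>0. node_cost K L c (Nd m cs') \<le> node_cost K L c t"
        proof (intro allI impI)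
          fix c :: real assume c: "0 \<le> c"
          have "0 \<le> real (K m) / real (L m) * c" using c by simp
          then have "fc K L (real (K m) / real (L m) * c) cs' \<le> fc K L (real (K m) / real (L m) * c) cs"
            using cs'(4) by blast
          then show "node_cost K L c (Nd m cs') \<le> node_cost K L c t"
            using nc_Nd[OF cne'] nc_Nd[OF cne] te by simp
        qed
        show ?thesis using b p c by blast
      qed
    qed
    from bchoice[OF node] obtain f where f: "\<forall>t\<in>set F. binary_node (f t) \<and> pm [f t] = pm [t] \<and>
        (\<forall>c\<ge>0. node_cost K L c (f t) \<le> node_cost K L c t)" by blast
    have "length (map f F) \<le> 2" using False by simp
    moreover have "list_all binary_node (map f F)" using f by (simp add: list_all_iff)
    moreover have "pm (map f F) = pm F" by (rule pm_map) (use f in blast)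
    moreover have "\<forall>c\<ge>0. fc K L c (map f F) \<le> fc K L c F"
      using f fc_map by blast
    ultimately show ?thesis by blast
  qed
qed



lemma path_props:
  assumes "is_ttm_tree N ts" "(p,l) \<in> set (root_paths ts)"
  shows "l \<in> {1..N} \<and> set p = {1..N} - {l} \<and> distinct p \<and> length p = N - 1"
proof -
  have ms: "mset (map snd (root_paths ts)) = mset [1..<N+1]" and
    pc: "\<forall>(p, l) \<in> set (root_paths ts). set p \<subseteq> {1..N} \<and> length p = N - 1 \<and> {1..N} - {l} \<subseteq> set p"
    using assms(1) unfolding is_ttm_tree_def by blast+
  have "snd (p,l) \<in> snd ` set (root_paths ts)" using assms(2) by (rule imageI)
  then have "l \<in> set (map snd (root_paths ts))" by simp
  then have "l \<in> set [1..<N+1]" using mset_eq_setD[OF ms] by simp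
  then have lN: "l \<in> {1..N}" by auto
  have h: "set p \<subseteq> {1..N}" "length p = N - 1" "{1..N} - {l} \<subseteq> set p"
    using ball_pair[OF pc assms(2)] by blast+
  have cl: "card (set p) \<le> N - 1" using card_length[of p] h(2) by simp
  have lnp: "l \<notin> set p"
  proof
    assume "l \<in> set p"
    then have "{1..N} \<subseteq> set p" using h(3) by blast
    then have "card {1..N} \<le> card (set p)" by (rule card_mono[OF finite_set])
    then show False using cl lN by simp
  qed
  have sp: "set p = {1..N} - {l}" using h(1,3) lnp by blast
  have "card (set p) = N - 1" using sp lN by simp
  then have "distinct p" using h(2) by (simp add: card_distinct)
  then show ?thesis using lN sp h(2) by blast
qed

lemma snd_pm: "image_mset snd (pm F) = mset (map snd (root_paths F))"
proof -
  have "image_mset snd (mset (map (\<lambda>(p,l). (mset p, l)) xs)) = mset (map snd xs)" for xs :: "(nat list \<times> nat) list"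
    by (induction xs) auto
  then show ?thesis unfolding pm_def .
qed

lemma pm_path_ex:
  assumes "(mset p, l) \<in># pm G"
  shows "\<exists>q. (q,l) \<in> set (root_paths G) \<and> mset q = mset p"
proof -
  have "(mset p, l) \<in> (\<lambda>(p,l). (mset p, l)) ` set (root_paths G)"
    using assms unfolding pm_def by simp
  then obtain x where x: "(mset p, l) = (\<lambda>(p,l). (mset p, l)) x" "x \<in> set (root_paths G)"
    by (rule imageE)
  obtain q l' where xe: "x = (q,l')" by (cases x)
  have "(q,l) \<in> set (root_paths G) \<and> mset q = mset p" using x xe by simp
  then show ?thesis by blast
qed

lemma ttm_transfer:
  assumes "pm F = pm G" "is_ttm_tree N G"
  shows "is_ttm_tree N F"
proof -
  have ms: "mset (map snd (root_paths F)) = mset [1..<N+1]"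
    using snd_pm[of F] snd_pm[of G] assms unfolding is_ttm_tree_def by simp
  have pc: "\<forall>(p, l) \<in> set (root_paths G). set p \<subseteq> {1..N} \<and> length p = N - 1 \<and> {1..N} - {l} \<subseteq> set p"
    using assms(2) unfolding is_ttm_tree_def by blast
  have "set p \<subseteq> {1..N} \<and> length p = N - 1 \<and> {1..N} - {l} \<subseteq> set p"
    if pl: "(p,l) \<in> set (root_paths F)" for p l
  proof -
    have "(\<lambda>(p,l). (mset p, l)) (p,l) \<in> (\<lambda>(p,l). (mset p, l)) ` set (root_paths F)" using pl by (rule imageI)
    then have "(mset p, l) \<in># pm F" unfolding pm_def by simp
    then obtain q where q: "(q,l) \<in> set (root_paths G)" "mset q = mset p"
      using pm_path_ex assms(1) by metis
    have "set q = set p" using q(2) by (metis set_mset_mset)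
    moreover have "length q = length p" using q(2) by (metis size_mset)
    ultimately show ?thesis using ball_pair[OF pc q(1)] by simp
  qed
  then show ?thesis unfolding is_ttm_tree_def using ms by blast
qed

lemma ttm_good:
  assumes "is_ttm_tree N ts" "\<And>n. n \<in> {1..N} \<Longrightarrow> K n \<le> L n"
  shows "good K L (pm ts)"
proof -
  have A: "dm (fst x) \<and> snd x \<notin># fst x \<and> (\<forall>y\<in>#fst x. K y \<le> L y)"
    and B: "insert (snd x) (set_mset (fst x)) = {1..N}" if x: "x \<in># pm ts" for x
  proof -
    obtain P l where xe: "x = (P,l)" by (cases x)
    have "(P,l) \<in> (\<lambda>(p,l). (mset p, l)) ` set (root_paths ts)"
      using x xe unfolding pm_def by simp
    then obtain y where y: "(P,l) = (\<lambda>(p,l). (mset p, l)) y" "y \<in> set (root_paths ts)"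
      by (rule imageE)
    obtain p l' where ye: "y = (p,l')" by (cases y)
    have p: "(p,l) \<in> set (root_paths ts)" "P = mset p" using y ye by simp_all
    note pp = path_props[OF assms(1) p(1)]
    have "dm (mset p)" using pp unfolding dm_def by (simp add: distinct_count_atmost_1)
    have sp: "set p = {1..N} - {l}" and lN: "l \<in> {1..N}" using pp by blast+
    have nl: "l \<notin># mset p" using sp by simp
    have kl: "\<forall>y\<in>#mset p. K y \<le> L y"
    proof
      fix y assume "y \<in># mset p"
      then have "y \<in> {1..N}" using sp by simp
      then show "K y \<le> L y" by (rule assms(2))
    qed
    show "dm (fst x) \<and> snd x \<notin># fst x \<and> (\<forall>y\<in>#fst x. K y \<le> L y)"
      unfolding xe p(2) fst_conv snd_conv using \<open>dm (mset p)\<close> nl kl by (intro conjI)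
    have "insert l (set p) = {1..N}" unfolding sp using lN by (rule insert_Diff)
    then show "insert (snd x) (set_mset (fst x)) = {1..N}" unfolding xe p(2) by simp
  qed
  have C: "dm (image_mset snd (pm ts))"
  proof -
    have "image_mset snd (pm ts) = mset [1..<N+1]" using snd_pm[of ts] assms(1)
      unfolding is_ttm_tree_def by simp
    then show ?thesis unfolding dm_def
    proof (intro allI)
      fix a
      have "distinct [1..<N+1]" by simp
      then have "count (mset [1..<N+1]) a = (if a \<in> set [1..<N+1] then 1 else 0)"
        unfolding distinct_count_atmost_1 by blast
      then show "count (image_mset snd (pm ts)) a \<le> 1" using \<open>image_mset snd (pm ts) = mset [1..<N+1]\<close> by simp
    qed
  qed
  have G1: "\<forall>x\<in>#pm ts. dm (fst x) \<and> snd x \<notin># fst x \<and> (\<forall>y\<in>#fst x. K y \<le> L y)"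
  proof (rule ballI)
    fix x assume "x \<in># pm ts"
    then show "dm (fst x) \<and> snd x \<notin># fst x \<and> (\<forall>y\<in>#fst x. K y \<le> L y)" by (rule A)
  qed
  have G2: "\<forall>x\<in>#pm ts. \<forall>y\<in>#pm ts. insert (snd x) (set_mset (fst x)) = insert (snd y) (set_mset (fst y))"
  proof (intro ballI)
    fix x y assume "x \<in># pm ts" "y \<in># pm ts"
    from B[OF this(1)] B[OF this(2)]
    show "insert (snd x) (set_mset (fst x)) = insert (snd y) (set_mset (fst y))" by simp
  qed
  show ?thesis unfolding good_def using G1 G2 C by (intro conjI)
qed



fun chain :: "nat list \<Rightarrow> nat \<Rightarrow> tnode" where
  "chain [] n = Nd n []"
| "chain (a # as) n = Nd a [chain as n]"

lemma lp_chain: "leaf_paths (chain p n) = [(p,n)]"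
  by (induction p) auto

lemma rp_chains: "root_paths (map (\<lambda>n. chain (f n) n) xs) = map (\<lambda>n. (f n, n)) xs"
  by (induction xs) (auto simp: rp_Cons lp_chain)

lemma ttm_exists:
  assumes "N \<ge> 1"
  shows "is_ttm_tree N (map (\<lambda>n. chain (filter (\<lambda>x. x \<noteq> n) [1..<N+1]) n) [1..<N+1])"
proof -
  let ?f = "\<lambda>n. filter (\<lambda>x. x \<noteq> n) [1..<N+1]"
  have rp: "root_paths (map (\<lambda>n. chain (?f n) n) [1..<N+1]) = map (\<lambda>n. (?f n, n)) [1..<N+1]"
    by (rule rp_chains)
  have ms: "mset (map snd (map (\<lambda>n. (?f n, n)) [1..<N+1])) = mset [1..<N+1]"
    by (simp add: o_def)
  have pc: "set p \<subseteq> {1..N} \<and> length p = N - 1 \<and> {1..N} - {l} \<subseteq> set p"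
    if pl: "(p,l) \<in> set (map (\<lambda>n. (?f n, n)) [1..<N+1])" for p l
  proof -
    have l: "l \<in> {1..N}" and p: "p = ?f l" using pl by auto
    have sp: "set p = {1..N} - {l}" using p by auto
    have "distinct p" using p by simp
    then have "length p = card (set p)" by (simp add: distinct_card)
    also have "\<dots> = N - 1" using sp l by simp
    finally show ?thesis using sp by simp
  qed
  show ?thesis unfolding is_ttm_tree_def rp using ms pc by blast
qed

fun bnd :: "nat \<Rightarrow> nat \<Rightarrow> tnode \<Rightarrow> bool" where
  "bnd N d (Nd n cs) \<longleftrightarrow> n \<le> N \<and> length cs \<le> 2 \<and> (cs \<noteq> [] \<longrightarrow> 0 < d \<and> (\<forall>c\<in>set cs. bnd N (d - 1) c))"

lemma bnd_finite: "finite {t. bnd N d t}"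
proof (induction d)
  case 0
  have "{t. bnd N 0 t} \<subseteq> (\<lambda>n. Nd n []) ` {..N}"
  proof
    fix t assume "t \<in> {t. bnd N 0 t}"
    then have b: "bnd N 0 t" by simp
    obtain n cs where te: "t = Nd n cs" by (cases t)
    have "cs = []" "n \<le> N" using b te by auto
    then show "t \<in> (\<lambda>n. Nd n []) ` {..N}" using te by simp
  qed
  then show ?case by (rule finite_subset) simp
next
  case (Suc d)
  have "{t. bnd N (Suc d) t} \<subseteq> (\<lambda>(n,cs). Nd n cs) ` ({..N} \<times> {cs. set cs \<subseteq> {t. bnd N d t} \<and> length cs \<le> 2})"
  proof
    fix t assume "t \<in> {t. bnd N (Suc d) t}"
    then have b: "bnd N (Suc d) t" by simp
    obtain n cs where te: "t = Nd n cs" by (cases t)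
    have "n \<le> N" "length cs \<le> 2" "set cs \<subseteq> {t. bnd N d t}" using b te by auto
    then have "(n,cs) \<in> {..N} \<times> {cs. set cs \<subseteq> {t. bnd N d t} \<and> length cs \<le> 2}" by simp
    then show "t \<in> (\<lambda>(n,cs). Nd n cs) ` ({..N} \<times> {cs. set cs \<subseteq> {t. bnd N d t} \<and> length cs \<le> 2})"
      using te by force
  qed
  moreover have "finite ({..N} \<times> {cs. set cs \<subseteq> {t. bnd N d t} \<and> length cs \<le> 2})"
    using finite_lists_length_le[OF Suc.IH] by simp
  ultimately show ?case using finite_subset by blast
qed

lemma bnd_of:
  "binary_node t \<Longrightarrow> (\<forall>(p,l)\<in>set (leaf_paths t). length p \<le> d \<and> set p \<subseteq> {..N} \<and> l \<le> N) \<Longrightarrow> bnd N d t"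
proof (induction t arbitrary: d)
  case (Nd m cs)
  show ?case
  proof (cases "cs = []")
    case True
    have "(([]::nat list), m) \<in> set (leaf_paths (Nd m cs))" using True by simp
    from ball_pair[OF Nd.prems(2) this] have "m \<le> N" by simp
    then show ?thesis using True by simp
  next
    case False
    obtain c0 where c0: "c0 \<in> set cs" using False by (cases cs) auto
    obtain q l where ql: "(q,l) \<in> set (leaf_paths c0)" using lp_ne
      by (metis list.set_sel(1) surj_pair)
    from ball_pair[OF Nd.prems(2) child_path[OF c0 ql]]
    have h: "length (m#q) \<le> d" "set (m#q) \<subseteq> {..N}" by simp_all
    have mN: "m \<le> N" using h(2) by simp
    have d: "0 < d" using h(1) by simp
    have bn: "length cs \<le> 2" "list_all binary_node cs" using Nd.prems(1) by simp_all
    have ch: "bnd N (d - 1) c" if c: "c \<in> set cs" for c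
    proof (rule Nd.IH[OF c])
      show "binary_node c" using bn(2) c by (simp add: list_all_iff)
      show "\<forall>(p,l)\<in>set (leaf_paths c). length p \<le> d - 1 \<and> set p \<subseteq> {..N} \<and> l \<le> N"
      proof (rule ballI, clarify)
        fix p l assume pl: "(p,l) \<in> set (leaf_paths c)"
        from ball_pair[OF Nd.prems(2) child_path[OF c pl]]
        show "length p \<le> d - 1 \<and> set p \<subseteq> {..N} \<and> l \<le> N" by auto
      qed
    qed
    show ?thesis using mN d bn(1) ch by simp
  qed
qed



lemma cost_fc: "ttm_cost N K L ts = fc K L (\<Prod>j\<in>{1..N}. real (L j)) ts"
  by (simp add: ttm_cost_def fc_def)

lemma binarize_ttm:
  assumes "is_ttm_tree N ts" "\<And>n. n \<in> {1..N} \<Longrightarrow> K n \<le> L n"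
  shows "\<exists>ts'. is_ttm_tree N ts' \<and> binary_ttm ts' \<and> ttm_cost N K L ts' \<le> ttm_cost N K L ts"
proof -
  have g: "good K L (pm ts)" using ttm_good[OF assms] .
  obtain F' where F': "length F' \<le> 2" "list_all binary_node F'" "pm F' = pm ts"
    "\<forall>c\<ge>0. fc K L c F' \<le> fc K L c ts"
    using binarize[OF g] by blast
  have t: "is_ttm_tree N F'" using ttm_transfer[OF F'(3) assms(1)] .
  have b: "binary_ttm F'" using F'(1,2) by (simp add: binary_ttm_def)
  have "0 \<le> (\<Prod>j\<in>{1..N}. real (L j))" by (simp add: prod_nonneg)
  then have "ttm_cost N K L F' \<le> ttm_cost N K L ts" using F'(4) by (simp add: cost_fc)
  then show ?thesis using t b by blast
qed

theorem lemma1: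
  fixes N :: nat and K L :: "nat \<Rightarrow> nat"
  assumes "N \<ge> 1"
    and "\<And>n. n \<in> {1..N} \<Longrightarrow> 0 < K n"
    and "\<And>n. n \<in> {1..N} \<Longrightarrow> 0 < L n"
    and "\<And>n. n \<in> {1..N} \<Longrightarrow> K n \<le> L n"
  shows "\<exists>ts. is_ttm_tree N ts \<and> binary_ttm ts \<and>
           (\<forall>ts'. is_ttm_tree N ts' \<longrightarrow> ttm_cost N K L ts \<le> ttm_cost N K L ts')"
proof -
  define S where "S = {ts. is_ttm_tree N ts \<and> binary_ttm ts}"
  have fin: "finite S"
  proof (rule finite_subset)
    show "S \<subseteq> {xs. set xs \<subseteq> {t. bnd N (N - 1) t} \<and> length xs \<le> 2}"
    proof
      fix ts assume "ts \<in> S"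
      then have tt: "is_ttm_tree N ts" and bt: "binary_ttm ts" unfolding S_def by simp_all
      have bt2: "bnd N (N - 1) t" if t: "t \<in> set ts" for t
      proof (rule bnd_of)
        show "binary_node t" using bt t unfolding binary_ttm_def by (simp add: list_all_iff)
        show "\<forall>(p,l)\<in>set (leaf_paths t). length p \<le> N - 1 \<and> set p \<subseteq> {..N} \<and> l \<le> N"
        proof (rule ballI, clarify)
          fix p l assume pl: "(p,l) \<in> set (leaf_paths t)"
          have "(p,l) \<in> set (root_paths ts)" unfolding root_paths_def set_concat set_map using pl t by blast
          from path_props[OF tt this]
          have h: "l \<in> {1..N}" "set p = {1..N} - {l}" "length p = N - 1" by blast+
          have "set p \<subseteq> {..N}" unfolding h(2) by auto
          then show "length p \<le> N - 1 \<and> set p \<subseteq> {..N} \<and> l \<le> N" using h(1,3) by simp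
        qed
      qed
      then show "ts \<in> {xs. set xs \<subseteq> {t. bnd N (N - 1) t} \<and> length xs \<le> 2}"
      proof -
        have "length ts \<le> 2" using bt unfolding binary_ttm_def by simp
        moreover have "set ts \<subseteq> {t. bnd N (N - 1) t}" using bt2 by blast
        ultimately show ?thesis by simp
      qed
    qed
    show "finite {xs. set xs \<subseteq> {t. bnd N (N - 1) t} \<and> length xs \<le> 2}"
      by (rule finite_lists_length_le[OF bnd_finite])
  qed
  obtain ts0 where ts0: "is_ttm_tree N ts0" using ttm_exists[OF assms(1)] by blast
  obtain ts1 where "is_ttm_tree N ts1 \<and> binary_ttm ts1 \<and> ttm_cost N K L ts1 \<le> ttm_cost N K L ts0"
    using binarize_ttm[where K=K and L=L, OF ts0 assms(4)] by blast
  then have ne: "S \<noteq> {}" unfolding S_def by blast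
  define m where "m = arg_min_on (ttm_cost N K L) S"
  have mS: "m \<in> S" unfolding m_def by (rule arg_min_if_finite(1)[OF fin ne])
  have mmin: "\<not>(\<exists>x\<in>S. ttm_cost N K L x < ttm_cost N K L m)"
    unfolding m_def by (rule arg_min_if_finite(2)[OF fin ne])
  have "ttm_cost N K L m \<le> ttm_cost N K L ts'" if t': "is_ttm_tree N ts'" for ts'
  proof -
    obtain ts2 where ts2: "is_ttm_tree N ts2" "binary_ttm ts2" "ttm_cost N K L ts2 \<le> ttm_cost N K L ts'"
      using binarize_ttm[where K=K and L=L, OF t' assms(4)] by blast
    have "ts2 \<in> S" unfolding S_def using ts2 by simp
    then have "ttm_cost N K L m \<le> ttm_cost N K L ts2" using mmin by (meson not_le)
    then show ?thesis using ts2(3) by simp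
  qed
  then show ?thesis using mS unfolding S_def by blast
qed


end
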